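(* There is a one-to-one correspondence between isomorphism classes of complex unitary 3-Leibniz algebras $\mathbb{V}$ and isomorphism classes of pairs $(\mathfrak{g},\mathbb{V})$ where $\mathfrak{g}$ is a metric real Lie algebra and $\mathbb{V}$ is a faithful complex unitary representation of $\mathfrak{g}$.
   Context: All vector spaces are finite-dimensional. A hermitian form $h$ on a complex vector space is complex linear in the first argument, antilinear in the second, satisfies $h(u,v)=\overline{h(v,u)}$, and is assumed nondegenerate. A complex unitary 3-Leibniz algebra is a complex vector space $\mathbb{V}$ with a hermitian form $h$ and a map $[\![-,-,-]\!]:\mathbb{V}^3\to\mathbb{V}$ which is complex linear in the first and third arguments and complex antilinear in the second, satisfying for all $v,w,x,y,z$: unitarity $h([\![v,w,x]\!],y)=h(x,[\![w,v,y]\!])$; symmetry $h([\![v,w,x]\!],y)=h([\![x,y,v]\!],w)$; fundamental identity $[\![x,y,[\![v,w,z]\!]]\!]=[\![[\![x,y,v]\!],w,z]\!]-[\![v,[\![y,x,w]\!],z]\!]+[\![v,w,[\![x,y,z]\!]]\!]$. An isomorphism of such algebras is a complex linear bijection preserving the bracket and $h$. A metric real Lie algebra is a real Lie algebra with a nondegenerate symmetric ad-invariant bilinear form (any signature). A complex unitary representation of $\mathfrak{g}$ is a Lie algebra homomorphism $\mathfrak{g}\to\mathfrak{u}(\mathbb{V})$, i.e. to complex linear maps with $h(x\cdot u,v)+h(u,x\cdot v)=0$; faithful means injective. Pairs $(\mathfrak{g}_V,\mathbb{V})$, $(\mathfrak{g}_W,\mathbb{W})$ (with $\mathfrak{g}$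 viewed inside $\mathfrak{u}$ via the faithful representation) are isomorphic if there is a complex linear isometry $\varphi:\mathbb{V}\to\mathbb{W}$ with $\mathfrak{g}_W=\varphi\circ\mathfrak{g}_V\circ\varphi^{-1}$ and $x\mapsto\varphi x\varphi^{-1}$ an isometry of metric Lie algebras. *)

theory Defs
  imports "HOL-Analysis.Analysis"
begin

text \<open>The complex vector space V is modelled as complex^'n (finite 'n), complex scalar
multiplication is (*s); complex linear endomorphisms of V are matrices complex^'n^'n acting by *v.\<close>

type_synonym 'n cvec = "complex^'n"
type_synonym 'n cmat = "complex^'n^'n"

definition herm_form :: "('n::finite cvec \<Rightarrow> 'n cvec \<Rightarrow> complex) \<Rightarrow> bool" where
  "herm_form h \<longleftrightarrow>
     (\<forall>u u' v. h (u + u') v = h u v + h u' v) \<and>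
     (\<forall>c u v. h (c *s u) v = c * h u v) \<and>
     (\<forall>u v. h u v = cnj (h v u)) \<and>
     (\<forall>u. (\<forall>v. h u v = 0) \<longrightarrow> u = 0)"

definition unitary_3leibniz ::
  "('n::finite cvec \<Rightarrow> 'n cvec \<Rightarrow> complex) \<Rightarrow> ('n cvec \<Rightarrow> 'n cvec \<Rightarrow> 'n cvec \<Rightarrow> 'n cvec) \<Rightarrow> bool" where
  "unitary_3leibniz h br \<longleftrightarrow> herm_form h \<and>
     (\<forall>x x' y z. br (x + x') y z = br x y z + br x' y z) \<and>
     (\<forall>c x y z. br (c *s x) y z = c *s br x y z) \<and>
     (\<forall>x y y' z. br x (y + y') z = br x y z + br x y' z) \<and>
     (\<forall>c x y z. br x (c *s y) z = cnj c *s br x y z) \<and>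
     (\<forall>x y z z'. br x y (z + z') = br x y z + br x y z') \<and>
     (\<forall>c x y z. br x y (c *s z) = c *s br x y z) \<and>
     (\<forall>v w x y. h (br v w x) y = h x (br w v y)) \<and>
     (\<forall>v w x y. h (br v w x) y = h (br x y v) w) \<and>
     (\<forall>x y v w z. br x y (br v w z) =
        br (br x y v) w z - br v (br y x w) z + br v w (br x y z))"

definition skew_wrt :: "('n::finite cvec \<Rightarrow> 'n cvec \<Rightarrow> complex) \<Rightarrow> 'n cmat \<Rightarrow> bool" where
  "skew_wrt h X \<longleftrightarrow> (\<forall>u v. h (X *v u) v + h u (X *v v) = 0)"

definition commutator :: "'n::finite cmat \<Rightarrow> 'n cmat \<Rightarrow> 'n cmat" where
  "commutator X Y = X ** Y - Y ** X"

text \<open>A pair (g, V): V = (complex^'n, h), g a real Lie subalgebra G of u(V,h) (the image of the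
faithful representation), with a nondegenerate symmetric ad-invariant real bilinear form Bf on G.\<close>
definition metric_lie_pair ::
  "('n::finite cvec \<Rightarrow> 'n cvec \<Rightarrow> complex) \<Rightarrow> 'n cmat set \<Rightarrow> ('n cmat \<Rightarrow> 'n cmat \<Rightarrow> real) \<Rightarrow> bool" where
  "metric_lie_pair h G Bf \<longleftrightarrow> herm_form h \<and>
     0 \<in> G \<and>
     (\<forall>X\<in>G. \<forall>Y\<in>G. X + Y \<in> G) \<and>
     (\<forall>r::real. \<forall>X\<in>G. r *\<^sub>R X \<in> G) \<and>
     (\<forall>X\<in>G. skew_wrt h X) \<and>
     (\<forall>X\<in>G. \<forall>Y\<in>G. commutator X Y \<in> G) \<and>
     (\<forall>X\<in>G. \<forall>Y\<in>G. Bf X Y = Bf Y X) \<and>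
     (\<forall>X\<in>G. \<forall>X'\<in>G. \<forall>Y\<in>G. Bf (X + X') Y = Bf X Y + Bf X' Y) \<and>
     (\<forall>r::real. \<forall>X\<in>G. \<forall>Y\<in>G. Bf (r *\<^sub>R X) Y = r * Bf X Y) \<and>
     (\<forall>X\<in>G. (\<forall>Y\<in>G. Bf X Y = 0) \<longrightarrow> X = 0) \<and>
     (\<forall>X\<in>G. \<forall>Y\<in>G. \<forall>Z\<in>G. Bf (commutator X Y) Z = - Bf Y (commutator X Z))"

text \<open>The bracket associated to a pair: [[x,y,z]] = D(x,y) z, where D(x,y) = A + i C in the
complexification of g is defined by (D(x,y), X) = h(X x, y) for X in g, i.e.
Bf A X = Re h(Xx,y), Bf C X = Im h(Xx,y).\<close>
definition induced_bracket ::
  "('n::finite cvec \<Rightarrow> 'n cvec \<Rightarrow> complex) \<Rightarrow> 'n cmat set \<Rightarrow> ('n cmat \<Rightarrow> 'n cmat \<Rightarrow> real)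
   \<Rightarrow> ('n cvec \<Rightarrow> 'n cvec \<Rightarrow> 'n cvec \<Rightarrow> 'n cvec) \<Rightarrow> bool" where
  "induced_bracket h G Bf br \<longleftrightarrow>
     (\<forall>x y. \<exists>A\<in>G. \<exists>C\<in>G.
        (\<forall>X\<in>G. Bf A X = Re (h (X *v x) y) \<and> Bf C X = Im (h (X *v x) y)) \<and>
        (\<forall>z. br x y z = A *v z + \<i> *s (C *v z)))"

definition leibniz_iso ::
  "'n::finite cmat \<Rightarrow> ('n cvec \<Rightarrow> 'n cvec \<Rightarrow> complex) \<Rightarrow> ('n cvec \<Rightarrow> 'n cvec \<Rightarrow> 'n cvec \<Rightarrow> 'n cvec)
   \<Rightarrow> ('n cvec \<Rightarrow> 'n cvec \<Rightarrow> complex) \<Rightarrow> ('n cvec \<Rightarrow> 'n cvec \<Rightarrow> 'n cvec \<Rightarrow> 'n cvec) \<Rightarrow> bool" where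
  "leibniz_iso P h br h' br' \<longleftrightarrow> invertible P \<and>
     (\<forall>u v. h' (P *v u) (P *v v) = h u v) \<and>
     (\<forall>u v w. P *v br u v w = br' (P *v u) (P *v v) (P *v w))"

definition pair_iso ::
  "'n::finite cmat \<Rightarrow> ('n cvec \<Rightarrow> 'n cvec \<Rightarrow> complex) \<Rightarrow> 'n cmat set \<Rightarrow> ('n cmat \<Rightarrow> 'n cmat \<Rightarrow> real)
   \<Rightarrow> ('n cvec \<Rightarrow> 'n cvec \<Rightarrow> complex) \<Rightarrow> 'n cmat set \<Rightarrow> ('n cmat \<Rightarrow> 'n cmat \<Rightarrow> real) \<Rightarrow> bool" where
  "pair_iso P h G Bf h' G' Bf' \<longleftrightarrow> invertible P \<and>
     (\<forall>u v. h' (P *v u) (P *v v) = h u v) \<and>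
     G' = (\<lambda>X. P ** X ** matrix_inv P) ` G \<and>
     (\<forall>X\<in>G. \<forall>Y\<in>G. Bf' (P ** X ** matrix_inv P) (P ** Y ** matrix_inv P) = Bf X Y)"

end

theory Submission
  imports Defs
begin


context fixes h :: "'n::finite cvec \<Rightarrow> 'n cvec \<Rightarrow> complex" assumes H: "herm_form h"
begin
lemma h_add1: "h (u + u') v = h u v + h u' v" using H unfolding herm_form_def by blast
lemma h_scale1: "h (c *s u) v = c * h u v" using H unfolding herm_form_def by blast
lemma h_conj: "h u v = cnj (h v u)" using H unfolding herm_form_def by blast
lemma h_nd1: "(\<And>v. h u v = 0) \<Longrightarrow> u = 0" using H unfolding herm_form_def by blast
lemma h_add2: "h u (v + v') = h u v + h u v'"
  by (metis h_conj h_add1 complex_cnj_add)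
lemma h_scale2: "h u (c *s v) = cnj c * h u v"
  by (metis h_conj h_scale1 complex_cnj_mult complex_cnj_cnj)
lemma h_zero1[simp]: "h 0 v = 0"
  using h_scale1[of 0 u v for u] by simp
lemma h_zero2[simp]: "h u 0 = 0"
  using h_scale2[of u 0 v for v] by simp
lemma h_neg1: "h (- u) v = - h u v"
  using h_scale1[of "-1" u v] by simp
lemma h_neg2: "h u (- v) = - h u v"
  using h_scale2[of u "-1" v] by simp
lemma h_diff1: "h (u - u') v = h u v - h u' v"
  using h_add1[of u "-u'" v] h_neg1 by simp
lemma h_diff2: "h u (v - v') = h u v - h u v'"
  using h_add2[of u v "-v'"] h_neg2 by simp
lemma h_nd2: "(\<And>u. h u v = 0) \<Longrightarrow> v = 0"
  by (metis h_nd1 h_conj complex_cnj_zero)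
end

lemma mv_scaleR: "((r::real) *\<^sub>R (M::'n::finite cmat)) *v z = complex_of_real r *s (M *v z)"
proof -
  have e: "\<And>a::complex. r *\<^sub>R a = complex_of_real r * a" by (simp add: scaleR_conv_of_real)
  show ?thesis by (simp add: vec_eq_iff matrix_vector_mult_def sum_distrib_left e mult.assoc)
qed

lemma mv_add: "((M::'n::finite cmat) + N) *v z = M *v z + N *v z"
  by (simp add: matrix_vector_mult_add_rdistrib)
lemma mv_diff: "((M::'n::finite cmat) - N) *v z = M *v z - N *v z"
  by (simp add: matrix_vector_mult_diff_rdistrib)
lemma mv_zero: "(0::'n::finite cmat) *v z = 0"
  by (simp add: vec_eq_iff matrix_vector_mult_def)
lemma mv_comm: "commutator (X::'n::finite cmat) Y *v z = X *v (Y *v z) - Y *v (X *v z)"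
  by (simp add: commutator_def mv_diff matrix_vector_mul_assoc)
lemma mv_addv: "(M::'n::finite cmat) *v (u + v) = M *v u + M *v v"
  by (simp add: matrix_vector_right_distrib)
lemma mv_smult: "(M::'n::finite cmat) *v (c *s v) = c *s (M *v v)"
  by (rule vec.scale)

section \<open>Metric Lie pairs\<close>

locale MLP =
  fixes h :: "'n::finite cvec \<Rightarrow> 'n cvec \<Rightarrow> complex" and G :: "'n cmat set"
    and Bf :: "'n cmat \<Rightarrow> 'n cmat \<Rightarrow> real"
  assumes mlp: "metric_lie_pair h G Bf"
begin

lemma herm: "herm_form h" using mlp unfolding metric_lie_pair_def by blast
lemma G0: "0 \<in> G" using mlp unfolding metric_lie_pair_def by blast
lemma Gadd: "X \<in> G \<Longrightarrow> Y \<in> G \<Longrightarrow> X + Y \<in> G" using mlp unfolding metric_lie_pair_def by blast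
lemma Gscale: "X \<in> G \<Longrightarrow> r *\<^sub>R X \<in> G" using mlp unfolding metric_lie_pair_def by blast
lemma Gskew: "X \<in> G \<Longrightarrow> h (X *v u) v + h u (X *v v) = 0"
  using mlp unfolding metric_lie_pair_def skew_wrt_def by blast
lemma Gcomm: "X \<in> G \<Longrightarrow> Y \<in> G \<Longrightarrow> commutator X Y \<in> G" using mlp unfolding metric_lie_pair_def by blast
lemma Bsym: "X \<in> G \<Longrightarrow> Y \<in> G \<Longrightarrow> Bf X Y = Bf Y X" using mlp unfolding metric_lie_pair_def by blast
lemma Badd: "X \<in> G \<Longrightarrow> X' \<in> G \<Longrightarrow> Y \<in> G \<Longrightarrow> Bf (X + X') Y = Bf X Y + Bf X' Y"
  using mlp unfolding metric_lie_pair_def by blast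
lemma Bscale: "X \<in> G \<Longrightarrow> Y \<in> G \<Longrightarrow> Bf (r *\<^sub>R X) Y = r * Bf X Y"
  using mlp unfolding metric_lie_pair_def by blast
lemma Bnd: "X \<in> G \<Longrightarrow> (\<And>Y. Y \<in> G \<Longrightarrow> Bf X Y = 0) \<Longrightarrow> X = 0"
  using mlp unfolding metric_lie_pair_def by blast
lemma Binv: "X \<in> G \<Longrightarrow> Y \<in> G \<Longrightarrow> Z \<in> G \<Longrightarrow> Bf (commutator X Y) Z = - Bf Y (commutator X Z)"
  using mlp unfolding metric_lie_pair_def by blast

lemma Gneg: "X \<in> G \<Longrightarrow> - X \<in> G" using Gscale[of X "-1"] by simp
lemma Gdiff: "X \<in> G \<Longrightarrow> Y \<in> G \<Longrightarrow> X - Y \<in> G" using Gadd Gneg by (metis diff_conv_add_uminus)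
lemma subG: "subspace G"
  unfolding subspace_def using G0 Gadd Gscale by blast
lemma Bzero: "Y \<in> G \<Longrightarrow> Bf 0 Y = 0" using Bscale[OF G0, of Y 0] by simp
lemma Bneg: "X \<in> G \<Longrightarrow> Y \<in> G \<Longrightarrow> Bf (- X) Y = - Bf X Y" using Bscale[of X Y "-1"] by simp
lemma Bdiff: "X \<in> G \<Longrightarrow> X' \<in> G \<Longrightarrow> Y \<in> G \<Longrightarrow> Bf (X - X') Y = Bf X Y - Bf X' Y"
  using Badd[of X "-X'" Y] Bneg Gneg by simp
lemma Badd2: "X \<in> G \<Longrightarrow> Y \<in> G \<Longrightarrow> Y' \<in> G \<Longrightarrow> Bf X (Y + Y') = Bf X Y + Bf X Y'"
  using Badd Bsym Gadd by metis
lemma Bscale2: "X \<in> G \<Longrightarrow> Y \<in> G \<Longrightarrow> Bf X (r *\<^sub>R Y) = r * Bf X Y"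
  using Bscale Bsym Gscale by metis

lemma uniq: "P \<in> G \<Longrightarrow> Q \<in> G \<Longrightarrow> (\<And>X. X \<in> G \<Longrightarrow> Bf P X = Bf Q X) \<Longrightarrow> P = Q"
  using Bnd[of "P - Q"] Gdiff Bdiff by force

lemma span_G: "span G = G" using subG by (simp add: span_eq_iff)
lemma span_subG: "B \<subseteq> G \<Longrightarrow> span B \<subseteq> G" using subG span_minimal by blast

lemma Bf_span:
  assumes B: "B \<subseteq> G" and A: "A \<in> G" and eq: "\<And>c. c \<in> B \<Longrightarrow> Bf A c = \<phi> c"
    and phi_add: "\<And>x y. x \<in> G \<Longrightarrow> y \<in> G \<Longrightarrow> \<phi> (x + y) = \<phi> x + \<phi> y"
    and phi_scale: "\<And>r x. x \<in> G \<Longrightarrow> \<phi> (r *\<^sub>R x) = r * \<phi> x"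
  shows "Y \<in> span B \<Longrightarrow> Bf A Y = \<phi> Y"
proof -
  have ph0: "\<phi> 0 = 0" using phi_scale[of 0 0] G0 by simp
  have "subspace {Y. Y \<in> G \<and> Bf A Y = \<phi> Y}"
    unfolding subspace_def using G0 Gadd Gscale Badd2[OF A] Bscale2[OF A] ph0 phi_add phi_scale
      Bsym[OF A G0] Bzero[OF A] by auto
  moreover have "B \<subseteq> {Y. Y \<in> G \<and> Bf A Y = \<phi> Y}" using B eq by auto
  ultimately have "span B \<subseteq> {Y. Y \<in> G \<and> Bf A Y = \<phi> Y}" using span_minimal by blast
  then show "Y \<in> span B \<Longrightarrow> Bf A Y = \<phi> Y" by blast
qed

lemma riesz:
  assumes B: "B \<subseteq> G" "independent B" "G \<subseteq> span B"
  shows "\<exists>A\<in>G. \<forall>c\<in>B. Bf A c = f c"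
proof -
  have fin: "finite B" using B(2) independent_explicit by blast
  have GB: "span B = G" using span_subG B by blast
  define \<Psi> where "\<Psi> A = (\<Sum>c\<in>B. Bf A c *\<^sub>R c)" for A
  obtain g where g: "linear g" "\<forall>x\<in>B. g x = \<Psi> x" using linear_independent_extend[OF B(2)] by blast
  have Psi_G: "\<Psi> A \<in> G" for A
  proof -
    have "\<Psi> A \<in> span B" unfolding \<Psi>_def by (intro span_sum span_scale span_base)
    then show ?thesis using GB by simp
  qed
  have Psi0: "\<Psi> 0 = 0" unfolding \<Psi>_def using B(1) Bzero by (auto intro!: sum.neutral)
  have Psiadd: "\<Psi> (A + A') = \<Psi> A + \<Psi> A'" if "A \<in> G" "A' \<in> G" for A A'
    unfolding \<Psi>_def using B(1) that by (auto simp: Badd scaleR_add_left sum.distrib[symmetric] intro!: sum.cong)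
  have Psiscale: "\<Psi> (r *\<^sub>R A) = r *\<^sub>R \<Psi> A" if "A \<in> G" for A r
    unfolding \<Psi>_def using B(1) that by (auto simp: Bscale scaleR_sum_right intro!: sum.cong)
  have W: "subspace {A. A \<in> G \<and> g A = \<Psi> A}"
    unfolding subspace_def using G0 Gadd Gscale Psi0 Psiadd Psiscale linear_0[OF g(1)]
      linear_add[OF g(1)] linear_scale[OF g(1)] by auto
  have "B \<subseteq> {A. A \<in> G \<and> g A = \<Psi> A}" using B(1) g(2) by auto
  then have "span B \<subseteq> {A. A \<in> G \<and> g A = \<Psi> A}" using W span_minimal by blast
  then have gPsi: "A \<in> G \<Longrightarrow> g A = \<Psi> A" for A using GB by blast
  have inj: "inj_on g (span B)"
  proof (rule inj_onI)
    fix A A' assume AA: "A \<in> span B" "A' \<in> span B" "g A = g A'"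
    then have AG: "A \<in> G" "A' \<in> G" using GB by auto
    have "g (A - A') = 0" using AA(3) linear_diff[OF g(1)] by simp
    then have "\<Psi> (A - A') = 0" using gPsi Gdiff AG by metis
    then have "\<forall>c\<in>B. Bf (A - A') c = 0"
      using B(2) unfolding independent_explicit \<Psi>_def by blast
    then have "\<forall>Y\<in>span B. Bf (A - A') Y = 0"
      using Bf_span[OF B(1) Gdiff[OF AG], of "\<lambda>_. 0"] by auto
    then have "A - A' = 0" using Bnd[OF Gdiff[OF AG]] GB by blast
    then show "A = A'" by simp
  qed
  have "dim (g ` span B) = dim (span B)" using dim_image_eq[OF g(1), of "span B"] inj by (simp only: span_span)
  moreover have "g ` G \<subseteq> G" using gPsi Psi_G by auto
  moreover have "subspace (g ` G)" using linear_subspace_image[OF g(1) subG] .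
  ultimately have gG: "g ` G = G" using subspace_dim_equal[of "g ` G" G] subG GB by auto
  define w where "w = (\<Sum>c\<in>B. f c *\<^sub>R c)"
  have "w \<in> span B" unfolding w_def by (intro span_sum span_scale span_base)
  then have "w \<in> g ` G" using GB gG by simp
  then obtain A where A: "A \<in> G" "g A = w" by blast
  then have "\<Psi> A = w" using gPsi by simp
  then have "(\<Sum>c\<in>B. (Bf A c - f c) *\<^sub>R c) = 0"
    unfolding \<Psi>_def w_def by (simp add: scaleR_diff_left sum_subtractf)
  moreover have ind: "\<And>c. (\<Sum>v\<in>B. c v *\<^sub>R v) = 0 \<Longrightarrow> \<forall>v\<in>B. c v = 0"
    using B(2) unfolding independent_explicit by blast
  ultimately have "\<forall>c\<in>B. Bf A c - f c = 0"
    using ind[of "\<lambda>c. Bf A c - f c"] by blast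
  then show ?thesis using A(1) by auto
qed

lemma repr:
  assumes phi_add: "\<And>x y. \<phi> (x + y) = \<phi> x + \<phi> y" and phi_scale: "\<And>r x. \<phi> (r *\<^sub>R x) = r * \<phi> x"
  shows "\<exists>A\<in>G. \<forall>X\<in>G. Bf A X = \<phi> X"
proof -
  obtain B where B: "B \<subseteq> G" "independent B" "G \<subseteq> span B" by (metis basis_exists)
  obtain A where A: "A \<in> G" "\<forall>c\<in>B. Bf A c = \<phi> c" using riesz[OF B, of \<phi>] by blast
  show ?thesis using A Bf_span[OF B(1) A(1), of \<phi>] phi_add phi_scale B(3) by blast
qed

lemma spanning:
  assumes T: "T \<subseteq> G" and nd: "\<And>X. X \<in> G \<Longrightarrow> (\<forall>t\<in>T. Bf X t = 0) \<Longrightarrow> X = 0"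
  shows "G = span T"
proof -
  obtain S where S: "S \<subseteq> span T" "independent S" "span T \<subseteq> span S" by (metis basis_exists)
  have SG: "S \<subseteq> G" using S(1) span_subG[OF T] by blast
  obtain B where B: "S \<subseteq> B" "B \<subseteq> G" "independent B" "G \<subseteq> span B"
    using maximal_independent_subset_extend[OF SG S(2)] by blast
  have "B \<subseteq> S"
  proof
    fix b assume b: "b \<in> B"
    show "b \<in> S"
    proof (rule ccontr)
      assume nb: "b \<notin> S"
      obtain X where X: "X \<in> G" "\<forall>c\<in>B. Bf X c = (if c = b then 1 else 0)"
        using riesz[OF B(2-4), of "\<lambda>c. if c = b then 1 else 0"] by blast
      have "\<forall>c\<in>S. Bf X c = 0" using X(2) B(1) nb by auto
      then have "\<forall>Y\<in>span S. Bf X Y = 0" using Bf_span[OF SG X(1), of "\<lambda>_. 0"] by auto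
      then have "\<forall>t\<in>T. Bf X t = 0" using S(3) span_base by blast
      then have "X = 0" using nd X(1) by blast
      moreover have "Bf X b = 1" using X(2) b by simp
      ultimately show False using Bzero B(2) b by auto
    qed
  qed
  then have "G \<subseteq> span S" using B(4) span_mono by blast
  also have "\<dots> \<subseteq> span T" using S(1) by (simp add: span_minimal)
  finally show ?thesis using span_subG[OF T] by blast
qed

end

lemma mv_neg: "(- (M::'n::finite cmat)) *v z = - (M *v z)"
  using mv_scaleR[of "-1" M z] by (simp add: vec_eq_iff)

locale MLPB = MLP h G Bf for h :: "'n::finite cvec \<Rightarrow> 'n cvec \<Rightarrow> complex" and G Bf +
  fixes br assumes ib: "induced_bracket h G Bf br"
begin

definition isA where "isA x y M \<longleftrightarrow> M \<in> G \<and> (\<forall>X\<in>G. Bf M X = Re (h (X *v x) y))"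
definition isC where "isC x y M \<longleftrightarrow> M \<in> G \<and> (\<forall>X\<in>G. Bf M X = Im (h (X *v x) y))"
definition Am where "Am x y = (THE M. isA x y M)"
definition Cm where "Cm x y = (THE M. isC x y M)"

lemma exAC: "\<exists>A C. isA x y A \<and> isC x y C \<and> (\<forall>z. br x y z = A *v z + \<i> *s (C *v z))"
  using ib unfolding induced_bracket_def isA_def isC_def by blast

lemma isA_uniq: "isA x y M \<Longrightarrow> isA x y M' \<Longrightarrow> M = M'"
  unfolding isA_def by (metis uniq)
lemma isC_uniq: "isC x y M \<Longrightarrow> isC x y M' \<Longrightarrow> M = M'"
  unfolding isC_def by (metis uniq)

lemma isA_Am: "isA x y (Am x y)"
  unfolding Am_def using exAC isA_uniq by (metis theI)
lemma isC_Cm: "isC x y (Cm x y)"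
  unfolding Cm_def using exAC isC_uniq by (metis theI)
lemma Am_eq: "isA x y M \<Longrightarrow> Am x y = M" using isA_Am isA_uniq by blast
lemma Cm_eq: "isC x y M \<Longrightarrow> Cm x y = M" using isC_Cm isC_uniq by blast
lemma AmG: "Am x y \<in> G" using isA_Am isA_def by blast
lemma CmG: "Cm x y \<in> G" using isC_Cm isC_def by blast
lemma BAm: "X \<in> G \<Longrightarrow> Bf (Am x y) X = Re (h (X *v x) y)" using isA_Am isA_def by blast
lemma BCm: "X \<in> G \<Longrightarrow> Bf (Cm x y) X = Im (h (X *v x) y)" using isC_Cm isC_def by blast

lemma br_eq: "br x y z = Am x y *v z + \<i> *s (Cm x y *v z)"
  using exAC Am_eq Cm_eq by metis

lemma hG: "X \<in> G \<Longrightarrow> h (X *v x) y = Complex (Bf (Am x y) X) (Bf (Cm x y) X)"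
  by (simp add: BAm BCm complex_eq_iff)

lemma Am_add1: "Am (x + x') y = Am x y + Am x' y"
  by (rule Am_eq) (simp add: isA_def Gadd AmG Badd BAm mv_addv h_add1[OF herm])
lemma Cm_add1: "Cm (x + x') y = Cm x y + Cm x' y"
  by (rule Cm_eq) (simp add: isC_def Gadd CmG Badd BCm mv_addv h_add1[OF herm])
lemma Am_add2: "Am x (y + y') = Am x y + Am x y'"
  by (rule Am_eq) (simp add: isA_def Gadd AmG Badd BAm h_add2[OF herm])
lemma Cm_add2: "Cm x (y + y') = Cm x y + Cm x y'"
  by (rule Cm_eq) (simp add: isC_def Gadd CmG Badd BCm h_add2[OF herm])
lemma Am_scale1: "Am (c *s x) y = Re c *\<^sub>R Am x y - Im c *\<^sub>R Cm x y"
  by (rule Am_eq) (simp add: isA_def Gdiff Gscale AmG CmG Bdiff Bscale BAm BCm mv_smult h_scale1[OF herm])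
lemma Cm_scale1: "Cm (c *s x) y = Re c *\<^sub>R Cm x y + Im c *\<^sub>R Am x y"
  by (rule Cm_eq) (simp add: isC_def Gadd Gscale AmG CmG Badd Bscale BAm BCm mv_smult h_scale1[OF herm])
lemma Am_scale2: "Am x (c *s y) = Re c *\<^sub>R Am x y + Im c *\<^sub>R Cm x y"
  by (rule Am_eq) (simp add: isA_def Gadd Gscale AmG CmG Badd Bscale BAm BCm h_scale2[OF herm])
lemma Cm_scale2: "Cm x (c *s y) = Re c *\<^sub>R Cm x y - Im c *\<^sub>R Am x y"
  by (rule Cm_eq) (simp add: isC_def Gdiff Gscale AmG CmG Bdiff Bscale BAm BCm h_scale2[OF herm])

lemma skew_swap: "X \<in> G \<Longrightarrow> h (X *v y) x = - cnj (h (X *v x) y)"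
  using Gskew[of X y x] h_conj[OF herm, of y "X *v x"] by (simp add: eq_neg_iff_add_eq_0)

lemma Am_swap: "Am y x = - Am x y"
  by (rule Am_eq) (simp add: isA_def Gneg AmG Bneg BAm skew_swap[of _ y x])
lemma Cm_swap: "Cm y x = Cm x y"
  by (rule Cm_eq) (simp add: isC_def CmG BCm skew_swap[of _ y x])

lemma br_add1: "br (x + x') y z = br x y z + br x' y z"
  by (simp add: br_eq Am_add1 Cm_add1 mv_add vec_eq_iff algebra_simps)
lemma br_add2: "br x (y + y') z = br x y z + br x y' z"
  by (simp add: br_eq Am_add2 Cm_add2 mv_add vec_eq_iff algebra_simps)
lemma br_add3: "br x y (z + z') = br x y z + br x y z'"
  by (simp add: br_eq mv_addv vec_eq_iff algebra_simps)
lemma br_scale1: "br (c *s x) y z = c *s br x y z"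
  apply (simp add: br_eq Am_scale1 Cm_scale1 mv_add mv_diff mv_scaleR vec_eq_iff algebra_simps)
  apply (simp add: complex_eq_iff algebra_simps)
  done
lemma br_scale2: "br x (c *s y) z = cnj c *s br x y z"
  apply (simp add: br_eq Am_scale2 Cm_scale2 mv_add mv_diff mv_scaleR vec_eq_iff algebra_simps)
  apply (simp add: complex_eq_iff algebra_simps)
  done
lemma br_scale3: "br x y (c *s z) = c *s br x y z"
  by (simp add: br_eq mv_smult vec_eq_iff algebra_simps)

lemma skewG: "X \<in> G \<Longrightarrow> h (X *v u) v = - h u (X *v v)"
  using Gskew[of X u v] by (simp add: eq_neg_iff_add_eq_0)

lemma br_unit: "h (br v w x) y = h x (br w v y)"
proof -
  let ?A = "Am v w" and ?C = "Cm v w"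
  have "h (br v w x) y = h (?A *v x) y + \<i> * h (?C *v x) y"
    by (simp add: br_eq h_add1[OF herm] h_scale1[OF herm])
  also have "\<dots> = - h x (?A *v y) - \<i> * h x (?C *v y)"
    using skewG[OF AmG] skewG[OF CmG] by simp
  also have "\<dots> = h x (br w v y)"
    by (simp add: br_eq Am_swap[of w v] Cm_swap[of w v] mv_neg h_add2[OF herm] h_diff2[OF herm] h_scale2[OF herm] h_neg2[OF herm])
  finally show ?thesis .
qed

lemma br_sym: "h (br v w x) y = h (br x y v) w"
proof -
  have e: "h (br a b c) d = h (Am a b *v c) d + \<i> * h (Cm a b *v c) d" for a b c d
    by (simp add: br_eq h_add1[OF herm] h_scale1[OF herm])
  show ?thesis
    unfolding e using Bsym[OF AmG AmG, of x y v w] Bsym[OF AmG CmG, of x y v w]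
      Bsym[OF CmG AmG, of x y v w] Bsym[OF CmG CmG, of x y v w]
    by (simp add: hG AmG CmG complex_eq_iff)
qed

lemma der_A: "X \<in> G \<Longrightarrow> commutator X (Am x y) = Am (X *v x) y + Am x (X *v y)"
proof (rule uniq)
  assume X: "X \<in> G"
  show "commutator X (Am x y) \<in> G" using Gcomm[OF X AmG] .
  show "Am (X *v x) y + Am x (X *v y) \<in> G" using Gadd AmG by blast
  fix Y assume Y: "Y \<in> G"
  have "Bf (commutator X (Am x y)) Y = - Bf (Am x y) (commutator X Y)"
    using Binv[OF X AmG Y] Bsym[OF Gcomm[OF X Y] AmG] by simp
  also have "\<dots> = - Re (h (X *v (Y *v x)) y) + Re (h (Y *v (X *v x)) y)"
    by (simp add: BAm Gcomm X Y mv_comm h_diff1[OF herm])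
  also have "\<dots> = Bf (Am (X *v x) y + Am x (X *v y)) Y"
    by (simp add: Badd AmG Y BAm skewG[OF Y] skewG[OF X, of "Y *v x" y])
  finally show "Bf (commutator X (Am x y)) Y = Bf (Am (X *v x) y + Am x (X *v y)) Y" .
qed

lemma der_C: "X \<in> G \<Longrightarrow> commutator X (Cm x y) = Cm (X *v x) y + Cm x (X *v y)"
proof (rule uniq)
  assume X: "X \<in> G"
  show "commutator X (Cm x y) \<in> G" using Gcomm[OF X CmG] .
  show "Cm (X *v x) y + Cm x (X *v y) \<in> G" using Gadd CmG by blast
  fix Y assume Y: "Y \<in> G"
  have "Bf (commutator X (Cm x y)) Y = - Bf (Cm x y) (commutator X Y)"
    using Binv[OF X CmG Y] Bsym[OF Gcomm[OF X Y] CmG] by simp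
  also have "\<dots> = - Im (h (X *v (Y *v x)) y) + Im (h (Y *v (X *v x)) y)"
    by (simp add: BCm Gcomm X Y mv_comm h_diff1[OF herm])
  also have "\<dots> = Bf (Cm (X *v x) y + Cm x (X *v y)) Y"
    by (simp add: Badd CmG Y BCm skewG[OF Y] skewG[OF X, of "Y *v x" y])
  finally show "Bf (commutator X (Cm x y)) Y = Bf (Cm (X *v x) y + Cm x (X *v y)) Y" .
qed

lemma mv_swap: "(a::'n cmat) *v (M *v z) = M *v (a *v z) + commutator a M *v z"
  by (simp add: mv_comm)

lemma der_br: "a \<in> G \<Longrightarrow> a *v br v w z = br v w (a *v z) + br (a *v v) w z + br v (a *v w) z"
proof -
  assume a: "a \<in> G"
  have "a *v br v w z = a *v (Am v w *v z) + \<i> *s (a *v (Cm v w *v z))"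
    by (simp add: br_eq mv_addv mv_smult)
  also have "\<dots> = Am v w *v (a *v z) + (Am (a *v v) w *v z + Am v (a *v w) *v z)
      + \<i> *s (Cm v w *v (a *v z) + (Cm (a *v v) w *v z + Cm v (a *v w) *v z))"
    by (simp only: mv_swap[of a "Am v w"] mv_swap[of a "Cm v w"] der_A[OF a] der_C[OF a] mv_add)
  also have "\<dots> = br v w (a *v z) + br (a *v v) w z + br v (a *v w) z"
    by (simp add: br_eq vec_eq_iff algebra_simps)
  finally show ?thesis .
qed

lemma br_neg2: "br x (- y) z = - br x y z"
  using br_scale2[of x "-1" y z] by simp
lemma br_diff2: "br x (u - y) z = br x u z - br x y z"
  using br_add2[of x u "-y" z] br_neg2 by simp

lemma br_FI: "br x y (br v w z) = br (br x y v) w z - br v (br y x w) z + br v w (br x y z)"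
proof -
  let ?a = "Am x y" and ?c = "Cm x y"
  have "br x y (br v w z) = ?a *v br v w z + \<i> *s (?c *v br v w z)" by (simp add: br_eq)
  also have "\<dots> = (br v w (?a *v z) + br (?a *v v) w z + br v (?a *v w) z)
     + \<i> *s (br v w (?c *v z) + br (?c *v v) w z + br v (?c *v w) z)"
    by (simp only: der_br[OF AmG] der_br[OF CmG])
  finally have L: "br x y (br v w z) = \<dots>" .
  have R1: "br (br x y v) w z = br (?a *v v) w z + \<i> *s br (?c *v v) w z"
    by (simp add: br_eq[of x y v] br_add1 br_scale1)
  have "br y x w = \<i> *s (?c *v w) - ?a *v w"
    by (simp add: br_eq Am_swap[of y x] Cm_swap[of y x] mv_neg)
  then have R2: "br v (br y x w) z = - \<i> *s br v (?c *v w) z - br v (?a *v w) z"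
    by (simp add: br_diff2 br_scale2)
  have R3: "br v w (br x y z) = br v w (?a *v z) + \<i> *s br v w (?c *v z)"
    by (simp add: br_eq[of x y z] br_add3 br_scale3)
  show ?thesis unfolding L R1 R2 R3 by (simp add: vec_eq_iff algebra_simps)
qed

lemma unitary: "unitary_3leibniz h br"
  unfolding unitary_3leibniz_def
  by (intro conjI allI herm br_add1 br_add2 br_add3 br_scale1 br_scale2 br_scale3 br_unit br_sym br_FI)

end


context MLP begin
lemma ex_br: "\<exists>br. induced_bracket h G Bf br"
proof -
  have ex: "\<exists>A\<in>G. \<forall>X\<in>G. Bf A X = f (h (X *v x) y)"
    if f: "\<And>a b. f (a + b) = f a + f b" "\<And>r a. f (complex_of_real r * a) = r * f a" for f x y
    by (rule repr) (simp_all add: mv_add mv_scaleR h_add1[OF herm] h_scale1[OF herm] f)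
  have "\<forall>x y. \<exists>A\<in>G. \<forall>X\<in>G. Bf A X = Re (h (X *v x) y)"
    using ex[of Re] by simp
  then obtain AA where AA: "\<And>x y. AA x y \<in> G \<and> (\<forall>X\<in>G. Bf (AA x y) X = Re (h (X *v x) y))"
    by metis
  have "\<forall>x y. \<exists>A\<in>G. \<forall>X\<in>G. Bf A X = Im (h (X *v x) y)"
    using ex[of Im] by simp
  then obtain CC where CC: "\<And>x y. CC x y \<in> G \<and> (\<forall>X\<in>G. Bf (CC x y) X = Im (h (X *v x) y))"
    by metis
  have "induced_bracket h G Bf (\<lambda>x y z. AA x y *v z + \<i> *s (CC x y *v z))"
    unfolding induced_bracket_def using AA CC by blast
  then show ?thesis by blast
qed
end



lemma inv_props: assumes "invertible (P::'n::finite cmat)"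
  shows "P ** matrix_inv P = mat 1" "matrix_inv P ** P = mat 1"
proof -
  have "\<exists>A'. P ** A' = mat 1 \<and> A' ** P = mat 1" using assms unfolding invertible_def by blast
  then have "P ** matrix_inv P = mat 1 \<and> matrix_inv P ** P = mat 1"
    unfolding matrix_inv_def by (rule someI_ex)
  then show "P ** matrix_inv P = mat 1" "matrix_inv P ** P = mat 1" by auto
qed

lemma conj_mv: assumes "invertible (P::'n::finite cmat)"
  shows "(P ** X ** matrix_inv P) *v (P *v w) = P *v (X *v w)"
proof -
  have "matrix_inv P *v (P *v w) = w"
    using inv_props[OF assms] by (simp add: matrix_vector_mul_assoc)
  then show ?thesis by (simp add: matrix_vector_mul_assoc[symmetric])
qed

lemma P_Pinv: assumes "invertible (P::'n::finite cmat)" shows "P *v (matrix_inv P *v w) = w"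
  using inv_props[OF assms] by (simp add: matrix_vector_mul_assoc)

lemma conj_linear: "linear (\<lambda>X::'n::finite cmat. (P::'n cmat) ** X ** (Q::'n cmat))"
proof (rule linearI)
  fix X Y :: "'n cmat" and r :: real
  show "P ** (X + Y) ** Q = P ** X ** Q + P ** Y ** Q"
    by (simp add: matrix_eq mv_add matrix_vector_mul_assoc[symmetric] mv_addv)
  show "P ** (r *\<^sub>R X) ** Q = r *\<^sub>R (P ** X ** Q)"
    by (simp add: matrix_eq mv_scaleR matrix_vector_mul_assoc[symmetric] mv_smult)
qed

lemma skew_zero:
  assumes H: "herm_form h" and M1: "skew_wrt h M1" and M2: "skew_wrt h M2"
    and eq: "\<And>w. M1 *v w + \<i> *s (M2 *v w) = 0"
  shows "M1 = 0 \<and> M2 = 0"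
proof -
  have m1: "M1 *v w = - \<i> *s (M2 *v w)" for w using eq[of w] by (simp add: eq_neg_iff_add_eq_0)
  have s1: "h (M1 *v u) v = - h u (M1 *v v)" for u v
    using M1 unfolding skew_wrt_def by (simp add: eq_neg_iff_add_eq_0)
  have s2: "h (M2 *v u) v = - h u (M2 *v v)" for u v
    using M2 unfolding skew_wrt_def by (simp add: eq_neg_iff_add_eq_0)
  have "h (M1 *v u) v = h u (M1 *v v)" for u v
    unfolding m1 by (simp add: h_scale1[OF H] h_scale2[OF H] h_neg1[OF H] h_neg2[OF H] s2)
  then have "h (M1 *v u) v = 0" for u v using s1[of u v] by simp
  then have "M1 *v u = 0" for u using h_nd1[OF H] by blast
  then have "M1 = 0" by (simp add: matrix_eq mv_zero)
  moreover have "M2 *v u = 0" for u using m1[of u] \<open>M1 *v u = 0\<close> by (simp add: vec_eq_iff)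
  then have "M2 = 0" by (simp add: matrix_eq mv_zero)
  ultimately show ?thesis by simp
qed

locale TWO = a: MLPB h G Bf br + b: MLPB h' G' Bf' br'
  for h :: "'n::finite cvec \<Rightarrow> 'n cvec \<Rightarrow> complex" and G Bf br and h' :: "'n cvec \<Rightarrow> 'n cvec \<Rightarrow> complex" and G' Bf' br'
begin

lemma fwd: assumes PI: "pair_iso P h G Bf h' G' Bf'" shows "leibniz_iso P h br h' br'"
proof -
  let ?k = "\<lambda>X. P ** X ** matrix_inv P"
  have inv: "invertible P" and iso: "\<And>u v. h' (P *v u) (P *v v) = h u v"
    and GG: "G' = ?k ` G" and BB: "\<And>X Y. X \<in> G \<Longrightarrow> Y \<in> G \<Longrightarrow> Bf' (?k X) (?k Y) = Bf X Y"
    using PI unfolding pair_iso_def by auto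
  have A: "b.Am (P *v u) (P *v v) = ?k (a.Am u v)" for u v
  proof (rule b.Am_eq)
    show "b.isA (P *v u) (P *v v) (?k (a.Am u v))"
      unfolding b.isA_def using GG a.AmG BB a.BAm by (auto simp: conj_mv[OF inv] iso)
  qed
  have C: "b.Cm (P *v u) (P *v v) = ?k (a.Cm u v)" for u v
  proof (rule b.Cm_eq)
    show "b.isC (P *v u) (P *v v) (?k (a.Cm u v))"
      unfolding b.isC_def using GG a.CmG BB a.BCm by (auto simp: conj_mv[OF inv] iso)
  qed
  have "P *v br u v w = br' (P *v u) (P *v v) (P *v w)" for u v w
    by (simp add: a.br_eq b.br_eq A C conj_mv[OF inv] mv_addv mv_smult)
  then show ?thesis unfolding leibniz_iso_def using inv iso by blast
qed

lemma (in MLPB) span_AC: "G = span ({Am u v | u v. True} \<union> {Cm u v | u v. True})"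
proof (rule spanning)
  show "{Am u v | u v. True} \<union> {Cm u v | u v. True} \<subseteq> G" using AmG CmG by blast
  fix X assume X: "X \<in> G" and z: "\<forall>t\<in>{Am u v | u v. True} \<union> {Cm u v | u v. True}. Bf X t = 0"
  have "h (X *v u) v = 0" for u v
  proof -
    have "Bf X (Am u v) = 0" "Bf X (Cm u v) = 0" using z by blast+
    then show ?thesis using Bsym[OF X AmG, of u v] Bsym[OF X CmG, of u v] BAm[OF X] BCm[OF X]
      by (simp add: complex_eq_iff)
  qed
  then have "X *v u = 0" for u using h_nd1[OF herm] by blast
  then show "X = 0" by (simp add: matrix_eq mv_zero)
qed

lemma bwd: assumes LI: "leibniz_iso P h br h' br'" shows "pair_iso P h G Bf h' G' Bf'"
proof -
  let ?k = "\<lambda>X. P ** X ** matrix_inv P"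
  have inv: "invertible P" and iso: "\<And>u v. h' (P *v u) (P *v v) = h u v"
    and brr: "\<And>u v w. P *v br u v w = br' (P *v u) (P *v v) (P *v w)"
    using LI unfolding leibniz_iso_def by auto
  have PP: "\<And>w. P *v (matrix_inv P *v w) = w" using P_Pinv[OF inv] .
  have kskew: "skew_wrt h' (?k X)" if "X \<in> G" for X
    unfolding skew_wrt_def
  proof (intro allI)
    fix w1 w2
    have "h' (?k X *v w1) w2 + h' w1 (?k X *v w2) =
       h' (?k X *v (P *v (matrix_inv P *v w1))) (P *v (matrix_inv P *v w2))
       + h' (P *v (matrix_inv P *v w1)) (?k X *v (P *v (matrix_inv P *v w2)))"
      by (simp only: PP)
    also have "\<dots> = 0" by (simp only: conj_mv[OF inv] iso a.Gskew[OF that])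
    finally show "h' (?k X *v w1) w2 + h' w1 (?k X *v w2) = 0" .
  qed
  have skdiff: "skew_wrt h' (M - N)" if "skew_wrt h' M" "skew_wrt h' N" for M N
    unfolding skew_wrt_def
  proof (intro allI)
    fix u v
    have "h' (M *v u) v + h' u (M *v v) = 0" "h' (N *v u) v + h' u (N *v v) = 0"
      using that unfolding skew_wrt_def by blast+
    then show "h' ((M - N) *v u) v + h' u ((M - N) *v v) = 0"
      by (simp add: mv_diff h_diff1[OF b.herm] h_diff2[OF b.herm] add_diff_add[symmetric])
  qed
  have bG: "X \<in> G' \<Longrightarrow> skew_wrt h' X" for X using b.Gskew unfolding skew_wrt_def by blast
  have AC: "b.Am (P *v u) (P *v v) = ?k (a.Am u v) \<and> b.Cm (P *v u) (P *v v) = ?k (a.Cm u v)" for u v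
  proof -
    have "(b.Am (P *v u) (P *v v) - ?k (a.Am u v)) *v w + \<i> *s ((b.Cm (P *v u) (P *v v) - ?k (a.Cm u v)) *v w) = 0" for w
    proof -
      have "br' (P *v u) (P *v v) (P *v (matrix_inv P *v w)) = P *v br u v (matrix_inv P *v w)"
        using brr by simp
      then have "b.Am (P *v u) (P *v v) *v w + \<i> *s (b.Cm (P *v u) (P *v v) *v w) =
          ?k (a.Am u v) *v w + \<i> *s (?k (a.Cm u v) *v w)"
        using conj_mv[OF inv, of "a.Am u v" "matrix_inv P *v w"] conj_mv[OF inv, of "a.Cm u v" "matrix_inv P *v w"]
        by (simp add: PP a.br_eq b.br_eq mv_addv mv_smult)
      then show ?thesis by (simp add: mv_diff vec_eq_iff algebra_simps)
    qed
    then have "b.Am (P *v u) (P *v v) - ?k (a.Am u v) = 0 \<and> b.Cm (P *v u) (P *v v) - ?k (a.Cm u v) = 0"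
      by (intro skew_zero[OF b.herm] skdiff bG kskew b.AmG b.CmG a.AmG a.CmG)
    then show ?thesis by simp
  qed
  let ?T = "{a.Am u v | u v. True} \<union> {a.Cm u v | u v. True}"
  let ?T' = "{b.Am u v | u v. True} \<union> {b.Cm u v | u v. True}"
  have kT: "?k ` ?T = ?T'"
  proof
    show "?k ` ?T \<subseteq> ?T'"
    proof (rule image_subsetI)
      fix c assume "c \<in> ?T"
      then obtain u v where "c = a.Am u v \<or> c = a.Cm u v" by blast
      then have "?k c = b.Am (P *v u) (P *v v) \<or> ?k c = b.Cm (P *v u) (P *v v)" using AC[of u v] by auto
      then show "?k c \<in> ?T'" by blast
    qed
    show "?T' \<subseteq> ?k ` ?T"
    proof
      fix t assume "t \<in> ?T'"
      then obtain u v where "t = b.Am u v \<or> t = b.Cm u v" by blast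
      then have "t = b.Am (P *v (matrix_inv P *v u)) (P *v (matrix_inv P *v v)) \<or>
                 t = b.Cm (P *v (matrix_inv P *v u)) (P *v (matrix_inv P *v v))" by (simp add: PP)
      then have "t = ?k (a.Am (matrix_inv P *v u) (matrix_inv P *v v)) \<or> t = ?k (a.Cm (matrix_inv P *v u) (matrix_inv P *v v))"
        using AC[of "matrix_inv P *v u" "matrix_inv P *v v"] by auto
      then show "t \<in> ?k ` ?T" by blast
    qed
  qed
  have GG: "G' = ?k ` G"
  proof -
    have "G' = span ?T'" by (rule b.span_AC)
    also have "\<dots> = span (?k ` ?T)" by (simp only: kT)
    also have "\<dots> = ?k ` span ?T" by (rule span_linear_image[OF conj_linear])
    also have "\<dots> = ?k ` G" by (simp only: a.span_AC[symmetric])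
    finally show ?thesis .
  qed
  have BB: "Bf' (?k X) (?k Y) = Bf X Y" if X: "X \<in> G" and Y: "Y \<in> G" for X Y
  proof -
    have kX: "?k X \<in> G'" using GG X by blast
    have kG: "\<And>Z. Z \<in> G \<Longrightarrow> ?k Z \<in> G'" using GG by blast
    have "Bf X Y = Bf' (?k X) (?k Y)"
    proof (rule a.Bf_span[OF _ X, of ?T])
      show "?T \<subseteq> G" using a.AmG a.CmG by blast
      show "Y \<in> span ?T" using a.span_AC Y by simp
      fix c assume "c \<in> ?T"
      then obtain u v where "c = a.Am u v \<or> c = a.Cm u v" by blast
      then show "Bf X c = Bf' (?k X) (?k c)"
      proof
        assume c: "c = a.Am u v"
        have "Bf' (?k X) (?k c) = Bf' (?k X) (b.Am (P *v u) (P *v v))"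
          using AC[of u v] c by simp
        also have "\<dots> = Bf' (b.Am (P *v u) (P *v v)) (?k X)" by (rule b.Bsym[OF kX b.AmG])
        also have "\<dots> = Re (h (X *v u) v)" by (simp add: b.BAm[OF kX] conj_mv[OF inv] iso)
        also have "\<dots> = Bf X c" using c a.BAm[OF X] a.Bsym[OF X a.AmG] by simp
        finally show ?thesis by simp
      next
        assume c: "c = a.Cm u v"
        have "Bf' (?k X) (?k c) = Bf' (?k X) (b.Cm (P *v u) (P *v v))"
          using AC[of u v] c by simp
        also have "\<dots> = Bf' (b.Cm (P *v u) (P *v v)) (?k X)" by (rule b.Bsym[OF kX b.CmG])
        also have "\<dots> = Im (h (X *v u) v)" by (simp add: b.BCm[OF kX] conj_mv[OF inv] iso)
        also have "\<dots> = Bf X c" using c a.BCm[OF X] a.Bsym[OF X a.CmG] by simp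
        finally show ?thesis by simp
      qed
    next
      fix Z1 Z2 assume "Z1 \<in> G" "Z2 \<in> G"
      then show "Bf' (?k X) (?k (Z1 + Z2)) = Bf' (?k X) (?k Z1) + Bf' (?k X) (?k Z2)"
        using b.Badd2[OF kX kG kG] linear_add[OF conj_linear] by metis
    next
      fix r Z assume "Z \<in> G"
      then show "Bf' (?k X) (?k (r *\<^sub>R Z)) = r * Bf' (?k X) (?k Z)"
        using b.Bscale2[OF kX kG] linear_scale[OF conj_linear] by metis
    qed
    then show ?thesis by simp
  qed
  show ?thesis unfolding pair_iso_def using inv iso GG BB by blast
qed

end



lemma vec_linI: "(\<And>x y. f (x + y) = f x + f y) \<Longrightarrow> (\<And>c x. f (c *s x) = c *s f x) \<Longrightarrow> Vector_Spaces.linear (*s) (*s) (f::complex^'n::finite \<Rightarrow> complex^'n)"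
proof -
  have m: "module ((*s) :: complex \<Rightarrow> complex^'n \<Rightarrow> _)"
    using matrix_vector_mul_linear_gen[of "mat 1 :: complex^'n^'n"]
    by (simp add: module_hom_iff_linear[symmetric] module_hom_iff)
  assume "\<And>x y. f (x + y) = f x + f y" "\<And>c x. f (c *s x) = c *s f x"
  then show ?thesis using m by (simp add: module_hom_iff_linear[symmetric] module_hom_iff)
qed

locale UL =
  fixes h :: "'n::finite cvec \<Rightarrow> 'n cvec \<Rightarrow> complex" and br
  assumes ul: "unitary_3leibniz h br"
begin

lemmas ax = ul[unfolded unitary_3leibniz_def]

lemma herm: "herm_form h" using ax[THEN conjunct1] by blast
lemma br_add1: "br (x + x') y z = br x y z + br x' y z" using ax[THEN conjunct2, THEN conjunct1] by blast
lemma br_scale1: "br (c *s x) y z = c *s br x y z" using ax[THEN conjunct2, THEN conjunct2, THEN conjunct1] by blast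
lemma br_add2: "br x (y + y') z = br x y z + br x y' z" using ax[THEN conjunct2, THEN conjunct2, THEN conjunct2, THEN conjunct1] by blast
lemma br_scale2: "br x (c *s y) z = cnj c *s br x y z" using ax[THEN conjunct2, THEN conjunct2, THEN conjunct2, THEN conjunct2, THEN conjunct1] by blast
lemma br_add3: "br x y (z + z') = br x y z + br x y z'" using ax[THEN conjunct2, THEN conjunct2, THEN conjunct2, THEN conjunct2, THEN conjunct2, THEN conjunct1] by blast
lemma br_scale3: "br x y (c *s z) = c *s br x y z" using ax[THEN conjunct2, THEN conjunct2, THEN conjunct2, THEN conjunct2, THEN conjunct2, THEN conjunct2, THEN conjunct1] by blast
lemma br_unit: "h (br v w x) y = h x (br w v y)" using ax[THEN conjunct2, THEN conjunct2, THEN conjunct2, THEN conjunct2, THEN conjunct2, THEN conjunct2, THEN conjunct2, THEN conjunct1] by blast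
lemma br_sym: "h (br v w x) y = h (br x y v) w" using ax[THEN conjunct2, THEN conjunct2, THEN conjunct2, THEN conjunct2, THEN conjunct2, THEN conjunct2, THEN conjunct2, THEN conjunct2, THEN conjunct1] by blast
lemma br_FI: "br x y (br v w z) = br (br x y v) w z - br v (br y x w) z + br v w (br x y z)"
  using ax[THEN conjunct2, THEN conjunct2, THEN conjunct2, THEN conjunct2, THEN conjunct2, THEN conjunct2, THEN conjunct2, THEN conjunct2, THEN conjunct2] by blast

lemma br_neg1: "br (- x) y z = - br x y z" using br_scale1[of "-1" x y z] by simp
lemma br_neg2: "br x (- y) z = - br x y z" using br_scale2[of x "-1" y z] by simp
lemma br_neg3: "br x y (- z) = - br x y z" using br_scale3[of x y "-1" z] by simp
lemma br_diff1: "br (x - x') y z = br x y z - br x' y z" using br_add1[of x "-x'"] br_neg1 by simp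
lemma br_diff2: "br x (y - y') z = br x y z - br x y' z" using br_add2[of x y "-y'"] br_neg2 by simp
lemma br_diff3: "br x y (z - z') = br x y z - br x y z'" using br_add3[of x y z "-z'"] br_neg3 by simp
lemma half_cnj: "cnj (1/2 :: complex) = 1/2" by (simp add: complex_eq_iff)

definition Amat where "Amat x y = matrix (\<lambda>z. (1/2 :: complex) *s (br x y z - br y x z))"

lemma amv: "Amat x y *v z = (1/2 :: complex) *s (br x y z - br y x z)"
  unfolding Amat_def
  by (rule matrix_works, rule vec_linI) (simp_all add: br_add3 br_scale3 vec_eq_iff algebra_simps)

lemma Amat_add1: "Amat (x + x') y = Amat x y + Amat x' y"
  by (simp add: matrix_eq amv mv_add br_add1 br_add2 vec_eq_iff algebra_simps)
lemma Amat_add2: "Amat x (y + y') = Amat x y + Amat x y'"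
  by (simp add: matrix_eq amv mv_add br_add1 br_add2 vec_eq_iff algebra_simps)
lemma Amat_real1: "Amat (complex_of_real r *s x) y = r *\<^sub>R Amat x y"
  by (simp add: matrix_eq amv mv_scaleR br_scale1 br_scale2 vec_eq_iff algebra_simps)
lemma Amat_zero1: "Amat 0 y = 0" using Amat_add1[of 0 0 y] by simp
lemma Amat_zero2: "Amat x 0 = 0" using Amat_add2[of x 0 0] by simp

lemma Q: "Re (h (Amat v w *v x) y) = Re (h (Amat x y *v v) w)"
proof -
  have e1: "h (br w v x) y = cnj (h (br y x v) w)"
    using br_sym[of w v x y] br_unit[of x y w v] h_conj[OF herm, of w "br y x v"] by simp
  show ?thesis
    by (simp add: amv h_scale1[OF herm] h_diff1[OF herm] br_sym[of v w x y] e1)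
qed

definition S :: "('n cvec \<times> 'n cvec) list \<Rightarrow> 'n cmat" where "S ps = sum_list (map (\<lambda>(x, y). Amat x y) ps)"
definition F :: "('n cvec \<times> 'n cvec) list \<Rightarrow> 'n cmat \<Rightarrow> real" where "F qs M = sum_list (map (\<lambda>(v, w). Re (h (M *v v) w)) qs)"

lemma S_Nil[simp]: "S [] = 0" by (simp add: S_def)
lemma S_Cons[simp]: "S ((x, y) # ps) = Amat x y + S ps" by (simp add: S_def)
lemma S_append: "S (ps @ qs) = S ps + S qs" by (simp add: S_def)
lemma F_Nil[simp]: "F [] M = 0" by (simp add: F_def)
lemma F_Cons[simp]: "F ((v, w) # qs) M = Re (h (M *v v) w) + F qs M" by (simp add: F_def)

lemma F_add: "F qs (M + N) = F qs M + F qs N"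
  by (induction qs) (auto simp: mv_add h_add1[OF herm])
lemma F_scale: "F qs (r *\<^sub>R M) = r * F qs M"
  by (induction qs) (auto simp: mv_scaleR h_scale1[OF herm] algebra_simps)
lemma F_zero: "F qs 0 = 0"
  by (induction qs) (auto simp: mv_zero h_zero1[OF herm])
lemma F_Amat: "F qs (Amat x y) = Re (h (S qs *v x) y)"
  by (induction qs) (auto simp: mv_add mv_zero h_add1[OF herm] h_zero1[OF herm] Q)
lemma F_swap: "F qs (S ps) = F ps (S qs)"
  by (induction ps) (auto simp: F_zero F_add F_Amat)

definition G where "G = range S"
definition Bf where "Bf X Y = F (SOME qs. Y = S qs) X"

lemma SG: "S ps \<in> G" by (simp add: G_def)
lemma AmatG: "Amat x y \<in> G" using SG[of "[(x, y)]"] by simp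

lemma Bf_rep: "X \<in> G \<Longrightarrow> Y = S qs \<Longrightarrow> Bf X Y = F qs X"
proof -
  assume X: "X \<in> G" and Y: "Y = S qs"
  have "X \<in> range S" using X by (simp only: G_def)
  then obtain ps where ps: "X = S ps" by (rule rangeE)
  define q0 where "q0 = (SOME qs. Y = S qs)"
  have q0: "Y = S q0" unfolding q0_def by (rule someI[where x = qs], rule Y)
  have "Bf X Y = F q0 (S ps)" unfolding Bf_def q0_def ps ..
  also have "\<dots> = F ps (S q0)" by (rule F_swap)
  also have "\<dots> = F ps (S qs)" using q0 Y by simp
  also have "\<dots> = F qs (S ps)" by (rule F_swap)
  also have "\<dots> = F qs X" using ps by simp
  finally show ?thesis .
qed

lemma Bf_sym: "X \<in> G \<Longrightarrow> Y \<in> G \<Longrightarrow> Bf X Y = Bf Y X"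
proof -
  assume X: "X \<in> G" and Y: "Y \<in> G"
  have "X \<in> range S" "Y \<in> range S" using X Y by (simp_all only: G_def)
  then obtain ps qs where ps: "X = S ps" and qs: "Y = S qs" by (meson rangeE)
  have "Bf X Y = F qs (S ps)" using Bf_rep[OF X qs] ps by simp
  also have "\<dots> = F ps (S qs)" by (rule F_swap)
  also have "\<dots> = Bf Y X" using Bf_rep[OF Y ps] qs by simp
  finally show ?thesis .
qed

lemma Bf_gen: "X \<in> G \<Longrightarrow> Bf X (Amat x y) = Re (h (X *v x) y)"
  using Bf_rep[of X "Amat x y" "[(x, y)]"] by simp

lemma Amat_skew: "h (Amat x y *v u) v + h u (Amat x y *v v) = 0"
  by (simp add: amv h_scale1[OF herm] h_scale2[OF herm] h_diff1[OF herm] h_diff2[OF herm]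
      half_cnj br_unit[of x y u v] br_unit[of y x u v] algebra_simps)

lemma S_skew: "h (S ps *v u) v + h u (S ps *v v) = 0"
proof (induction ps)
  case Nil then show ?case by (simp add: mv_zero h_zero1[OF herm] h_zero2[OF herm])
next
  case (Cons p ps)
  obtain x y where p: "p = (x, y)" by fastforce
  show ?case using Cons Amat_skew[of x y u v]
    by (simp add: p mv_add h_add1[OF herm] h_add2[OF herm] algebra_simps)
qed

lemma G_skew: "X \<in> G \<Longrightarrow> h (X *v u) v = - h u (X *v v)"
  using S_skew unfolding G_def by (auto simp: eq_neg_iff_add_eq_0)

lemma key: "Amat a b *v br x y z - br x y (Amat a b *v z) = br (Amat a b *v x) y z + br x (Amat a b *v y) z"
proof -
  have f1: "br a b (br x y z) - br x y (br a b z) = br (br a b x) y z - br x (br b a y) z"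
    using br_FI[of a b x y z] by (simp add: algebra_simps)
  have f2: "br b a (br x y z) - br x y (br b a z) = br (br b a x) y z - br x (br a b y) z"
    using br_FI[of b a x y z] by (simp add: algebra_simps)
  have "Amat a b *v br x y z - br x y (Amat a b *v z) =
    (1/2::complex) *s ((br a b (br x y z) - br x y (br a b z)) - (br b a (br x y z) - br x y (br b a z)))"
    by (simp add: amv br_scale3 br_diff3 vec_eq_iff algebra_simps)
  also have "\<dots> = (1/2::complex) *s ((br (br a b x) y z - br x (br b a y) z) - (br (br b a x) y z - br x (br a b y) z))"
    by (simp only: f1 f2)
  also have "\<dots> = br (Amat a b *v x) y z + br x (Amat a b *v y) z"
    by (simp add: amv br_scale1 br_scale2 br_diff1 br_diff2 half_cnj vec_eq_iff algebra_simps)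
  finally show ?thesis .
qed

lemma comm_Amat: "commutator (Amat a b) (Amat x y) = Amat (Amat a b *v x) y + Amat x (Amat a b *v y)"
proof -
  let ?T = "Amat a b"
  have "commutator ?T (Amat x y) *v z = (Amat (?T *v x) y + Amat x (?T *v y)) *v z" for z
  proof -
    have "commutator ?T (Amat x y) *v z =
       (1/2::complex) *s ((?T *v br x y z - br x y (?T *v z)) - (?T *v br y x z - br y x (?T *v z)))"
      by (simp add: mv_comm amv mv_smult matrix_vector_right_distrib vec_eq_iff algebra_simps
          matrix_vector_mult_diff_distrib br_scale3 br_diff3)
    also have "\<dots> = (1/2::complex) *s ((br (?T *v x) y z + br x (?T *v y) z) - (br (?T *v y) x z + br y (?T *v x) z))"
      by (simp only: key)
    also have "\<dots> = (Amat (?T *v x) y + Amat x (?T *v y)) *v z"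
      by (simp add: mv_add amv vec_eq_iff algebra_simps)
    finally show ?thesis .
  qed
  then show ?thesis by (simp add: matrix_eq)
qed

lemma comm_add1: "commutator ((X::'n cmat) + Y) Z = commutator X Z + commutator Y Z"
  by (simp add: matrix_eq mv_comm mv_add mv_addv)
lemma comm_add2: "commutator (X::'n cmat) (Y + Z) = commutator X Y + commutator X Z"
  by (simp add: matrix_eq mv_comm mv_add mv_addv)
lemma comm_zero1: "commutator (0::'n cmat) Z = 0"
  by (simp add: matrix_eq mv_comm mv_zero)
lemma comm_zero2: "commutator (X::'n cmat) 0 = 0"
  by (simp add: matrix_eq mv_comm mv_zero)

lemma comm_S: "commutator (S ps) (Amat x y) = Amat (S ps *v x) y + Amat x (S ps *v y)"
proof (induction ps)
  case Nil then show ?case by (simp add: comm_zero1 mv_zero Amat_zero1 Amat_zero2)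
next
  case (Cons p ps)
  obtain a b where p: "p = (a, b)" by fastforce
  show ?case using Cons by (simp add: p comm_add1 comm_Amat mv_add Amat_add1 Amat_add2)
qed

definition cq :: "'n cmat \<Rightarrow> ('n cvec \<times> 'n cvec) list \<Rightarrow> ('n cvec \<times> 'n cvec) list" where
  "cq X qs = concat (map (\<lambda>(v, w). [(X *v v, w), (v, X *v w)]) qs)"

lemma cq_Nil[simp]: "cq X [] = []" by (simp add: cq_def)
lemma cq_Cons[simp]: "cq X ((v, w) # qs) = (X *v v, w) # (v, X *v w) # cq X qs" by (simp add: cq_def)

lemma comm_cq: "X \<in> G \<Longrightarrow> commutator X (S qs) = S (cq X qs)"
proof (induction qs)
  case Nil then show ?case by (simp add: comm_zero2)
next
  case (Cons q qs)
  obtain v w where q: "q = (v, w)" by fastforce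
  have "X \<in> range S" using Cons(2) by (simp only: G_def)
  then obtain ps where X: "X = S ps" by (rule rangeE)
  show ?case using Cons by (simp add: q comm_add2 X comm_S)
qed

lemma Gcomm: "X \<in> G \<Longrightarrow> Y \<in> G \<Longrightarrow> commutator X Y \<in> G"
proof -
  assume X: "X \<in> G" and "Y \<in> G"
  then have "Y \<in> range S" by (simp only: G_def)
  then obtain qs where "Y = S qs" by (meson rangeE)
  then show ?thesis using comm_cq[OF X, of qs] SG by simp
qed

lemma F_cq: "X \<in> G \<Longrightarrow> F qs (commutator X Y) = - F (cq X qs) Y"
proof (induction qs)
  case Nil then show ?case by simp
next
  case (Cons q qs)
  obtain v w where q: "q = (v, w)" by fastforce
  show ?case using Cons G_skew[OF Cons(2), of "Y *v v" w]
    by (simp add: q mv_comm h_diff1[OF herm])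
qed

lemma G0: "0 \<in> G" using SG[of "[]"] by simp
lemma Gadd: "X \<in> G \<Longrightarrow> Y \<in> G \<Longrightarrow> X + Y \<in> G"
proof -
  assume "X \<in> G" "Y \<in> G"
  then have "X \<in> range S" "Y \<in> range S" by (simp_all only: G_def)
  then obtain ps qs where "X = S ps" "Y = S qs" by (meson rangeE)
  then have "X + Y = S (ps @ qs)" by (simp add: S_append)
  then show ?thesis by (simp only: SG)
qed
lemma S_real: "S (map (\<lambda>(x, y). (complex_of_real r *s x, y)) ps) = r *\<^sub>R S ps"
  by (induction ps) (auto simp: Amat_real1 scaleR_right_distrib)
lemma Gscale: "X \<in> G \<Longrightarrow> r *\<^sub>R X \<in> G"
proof -
  assume "X \<in> G"
  then have "X \<in> range S" by (simp only: G_def)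
  then obtain ps where "X = S ps" by (meson rangeE)
  then have "r *\<^sub>R X = S (map (\<lambda>(x, y). (complex_of_real r *s x, y)) ps)" by (simp add: S_real)
  then show ?thesis by (simp only: SG)
qed

lemma Bf_add: "Bf (X + X') Y = Bf X Y + Bf X' Y" by (simp add: Bf_def F_add)
lemma Bf_scale: "Bf (r *\<^sub>R X) Y = r * Bf X Y" by (simp add: Bf_def F_scale)

lemma Bf_nd: "X \<in> G \<Longrightarrow> (\<forall>Y\<in>G. Bf X Y = 0) \<Longrightarrow> X = 0"
proof -
  assume X: "X \<in> G" and z: "\<forall>Y\<in>G. Bf X Y = 0"
  have "h (X *v x) y = 0" for x y
  proof -
    have "Re (h (X *v x) y) = 0" using z AmatG Bf_gen[OF X] by metis
    moreover have "Re (h (X *v (\<i> *s x)) y) = 0" using z AmatG Bf_gen[OF X] by metis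
    then have "Im (h (X *v x) y) = 0" by (simp add: mv_smult h_scale1[OF herm])
    ultimately show ?thesis by (simp add: complex_eq_iff)
  qed
  then have "X *v x = 0" for x using h_nd1[OF herm] by blast
  then show "X = 0" by (simp add: matrix_eq mv_zero)
qed

lemma Bf_inv: "X \<in> G \<Longrightarrow> Y \<in> G \<Longrightarrow> Z \<in> G \<Longrightarrow> Bf (commutator X Y) Z = - Bf Y (commutator X Z)"
proof -
  assume X: "X \<in> G" and Y: "Y \<in> G" and Z: "Z \<in> G"
  have "Z \<in> range S" using Z by (simp only: G_def)
  then obtain qs where qs: "Z = S qs" by (rule rangeE)
  have "Bf (commutator X Y) Z = F qs (commutator X Y)" using Bf_rep[OF Gcomm[OF X Y] qs] .
  also have "\<dots> = - F (cq X qs) Y" using F_cq[OF X] .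
  also have "\<dots> = - Bf Y (commutator X Z)" using Bf_rep[OF Y, of "commutator X Z" "cq X qs"] comm_cq[OF X] qs by simp
  finally show ?thesis .
qed

lemma mlp: "metric_lie_pair h G Bf"
  unfolding metric_lie_pair_def skew_wrt_def
  apply (intro conjI)
  subgoal by (rule herm)
  subgoal by (rule G0)
  subgoal using Gadd by blast
  subgoal using Gscale by blast
  subgoal using G_skew by (simp add: eq_neg_iff_add_eq_0)
  subgoal using Gcomm by blast
  subgoal using Bf_sym by blast
  subgoal using Bf_add by blast
  subgoal using Bf_scale by blast
  subgoal using Bf_nd by blast
  subgoal using Bf_inv by blast
  done

lemma mvv_neg: "(M::'n cmat) *v (- v) = - (M *v v)"
  using mv_smult[of M "-1" v] by simp

lemma ib: "induced_bracket h G Bf br"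
  unfolding induced_bracket_def
proof (intro allI)
  fix x y
  have A: "\<forall>X\<in>G. Bf (Amat x y) X = Re (h (X *v x) y)"
    using Bf_sym[OF AmatG] Bf_gen by simp
  have C: "\<forall>X\<in>G. Bf (Amat (- \<i> *s x) y) X = Im (h (X *v x) y)"
    using Bf_sym[OF AmatG] Bf_gen by (simp add: mvv_neg mv_smult h_neg1[OF herm] h_scale1[OF herm])
  have "br x y z = Amat x y *v z + \<i> *s (Amat (- \<i> *s x) y *v z)" for z
    by (simp add: amv br_neg1 br_neg2 br_scale1 br_scale2 vec_eq_iff algebra_simps)
  then show "\<exists>A\<in>G. \<exists>C\<in>G. (\<forall>X\<in>G. Bf A X = Re (h (X *v x) y) \<and> Bf C X = Im (h (X *v x) y)) \<and>
        (\<forall>z. br x y z = A *v z + \<i> *s (C *v z))"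
    using A C AmatG by blast
qed

end


theorem mainTheorem6:
  shows "(\<forall>(h::'n::finite cvec \<Rightarrow> 'n cvec \<Rightarrow> complex) G Bf. metric_lie_pair h G Bf \<longrightarrow>
            (\<exists>br. induced_bracket h G Bf br) \<and>
            (\<forall>br. induced_bracket h G Bf br \<longrightarrow> unitary_3leibniz h br))
   \<and> (\<forall>(h::'n cvec \<Rightarrow> 'n cvec \<Rightarrow> complex) G Bf br h' G' Bf' br'.
        metric_lie_pair h G Bf \<and> metric_lie_pair h' G' Bf' \<and>
        induced_bracket h G Bf br \<and> induced_bracket h' G' Bf' br' \<longrightarrow>
        ((\<exists>P. pair_iso P h G Bf h' G' Bf') \<longleftrightarrow> (\<exists>P. leibniz_iso P h br h' br')))
   \<and> (\<forall>(h::'n cvec \<Rightarrow> 'n cvec \<Rightarrow> complex) br. unitary_3leibniz h br \<longrightarrow>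
        (\<exists>G Bf. metric_lie_pair h G Bf \<and> induced_bracket h G Bf br))"
proof (intro conjI allI impI)
  fix h :: "'n::finite cvec \<Rightarrow> 'n cvec \<Rightarrow> complex" and G Bf
  assume m: "metric_lie_pair h G Bf"
  show "\<exists>br. induced_bracket h G Bf br" using MLP.ex_br[OF MLP.intro[OF m]] .
  fix br assume i: "induced_bracket h G Bf br"
  have "MLPB h G Bf br" by (simp add: MLPB_def MLP_def MLPB_axioms_def m i)
  then show "unitary_3leibniz h br" by (rule MLPB.unitary)
next
  fix h :: "'n::finite cvec \<Rightarrow> 'n cvec \<Rightarrow> complex" and G Bf br and h' :: "'n cvec \<Rightarrow> 'n cvec \<Rightarrow> complex" and G' Bf' br'
  assume a: "metric_lie_pair h G Bf \<and> metric_lie_pair h' G' Bf' \<and>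
        induced_bracket h G Bf br \<and> induced_bracket h' G' Bf' br'"
  have T: "TWO h G Bf br h' G' Bf' br'" using a by (simp add: TWO_def MLPB_def MLP_def MLPB_axioms_def)
  show "(\<exists>P. pair_iso P h G Bf h' G' Bf') \<longleftrightarrow> (\<exists>P. leibniz_iso P h br h' br')"
    using TWO.fwd[OF T] TWO.bwd[OF T] by blast
next
  fix h :: "'n::finite cvec \<Rightarrow> 'n cvec \<Rightarrow> complex" and br
  assume u: "unitary_3leibniz h br"
  have U: "UL h br" using u by (simp add: UL_def)
  show "\<exists>G Bf. metric_lie_pair h G Bf \<and> induced_bracket h G Bf br"
    using UL.mlp[OF U] UL.ib[OF U] by blast
qed

end
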